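(* Let $a,b,c,d\ge1$ be integers and let $$M=\begin{bmatrix}a&-1&-1&-1\\-1&b&-1&-1\\-1&-1&c&-1\\-1&-1&-1&d\end{bmatrix}.$$ If $\det M=0$ and two of $a,b,c,d$ equal $5$, then the other two are either $1$ and $5$ (in some order) or $2$ and $2$. *)

theory Defs
  imports "HOL-Analysis.Analysis"
begin

definition Mabcd :: "int \<Rightarrow> int \<Rightarrow> int \<Rightarrow> int \<Rightarrow> int^4^4" where
  "Mabcd a b c d = (\<chi> i j. if i = j then
      (if i = 1 then a else if i = 2 then b else if i = 3 then c else d)
    else -1)"

end

theory Submission imports Defs begin
lemma det4: "det (Mabcd a b c d) = (a+1)*(b+1)*(c+1)*(d+1) - ((b+1)*(c+1)*(d+1) + (a+1)*(c+1)*(d+1) + (a+1)*(b+1)*(d+1) + (a+1)*(b+1)*(c+1))"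
proof -
  have f1: "finite {2::4, 3, 4}" "1 \<notin> {2::4, 3, 4}" by auto
  have f2: "finite {3::4, 4}" "2 \<notin> {3::4, 4}" by auto
  have f3: "finite {4::4}" "3 \<notin> {4::4}" by auto
  show ?thesis
    unfolding det_def UNIV_4
    unfolding sum_over_permutations_insert[OF f1]
    unfolding sum_over_permutations_insert[OF f2]
    unfolding sum_over_permutations_insert[OF f3]
    unfolding permutes_sing
    by (simp add: Mabcd_def sign_swap_id permutation_swap_id sign_compose permutation_compose sign_id swap_id_eq algebra_simps)
qed
lemma key: fixes x y :: int assumes "x \<ge> 1" "y \<ge> 1"
  and "36*(x+1)*(y+1) - (12*(x+1)*(y+1) + 36*(x+1) + 36*(y+1)) = 0"
  shows "(x = 1 \<and> y = 5) \<or> (x = 5 \<and> y = 1) \<or> (x = 2 \<and> y = 2)"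
proof -
  have e: "(2*x-1)*(2*y-1) = 9" using assms(3) by (simp add: algebra_simps)
  have p1: "2*x-1 \<ge> 1" "2*y-1 \<ge> 1" using assms by auto
  have "2*x-1 \<le> (2*x-1)*(2*y-1)" using p1 by simp
  hence x: "x \<le> 5" using e by simp
  have "2*y-1 \<le> (2*x-1)*(2*y-1)" using p1 by simp
  hence y: "y \<le> 5" using e by simp
  have xs: "x = 1 \<or> x = 2 \<or> x = 3 \<or> x = 4 \<or> x = 5" using x assms(1) by auto
  have ys: "y = 1 \<or> y = 2 \<or> y = 3 \<or> y = 4 \<or> y = 5" using y assms(2) by auto
  show ?thesis using xs ys e by auto
qed
lemma key2: fixes x y :: int assumes "x \<ge> 1" "y \<ge> 1"
  and "36*(x+1)*(y+1) - (12*(x+1)*(y+1) + 36*(x+1) + 36*(y+1)) = 0"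
  shows "{#x, y#} = {#1, 5#} \<or> {#x, y#} = {#2, 2#}"
  using key[OF assms] by (auto simp: add_mset_commute)

theorem lemma3p9:
  fixes a b c d :: int
  assumes "a \<ge> 1" "b \<ge> 1" "c \<ge> 1" "d \<ge> 1"
    and "det (Mabcd a b c d) = 0"
    and "i \<in> {0..<4::nat}" "j \<in> {0..<4::nat}" "i \<noteq> j"
    and "[a, b, c, d] ! i = 5" "[a, b, c, d] ! j = 5"
  shows "mset (map (\<lambda>k. [a, b, c, d] ! k)
           (filter (\<lambda>k. k \<noteq> i \<and> k \<noteq> j) [0..<4]))
         \<in> {{#1, 5#}, {#2, 2#}}"
proof -
  have D: "(a+1)*(b+1)*(c+1)*(d+1) - ((b+1)*(c+1)*(d+1) + (a+1)*(c+1)*(d+1) + (a+1)*(b+1)*(d+1) + (a+1)*(b+1)*(c+1)) = 0"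
    using assms(5) det4 by simp
  have is0: "i = 0 \<or> i = 1 \<or> i = 2 \<or> i = 3" using assms(6) by auto
  have js: "j = 0 \<or> j = 1 \<or> j = 2 \<or> j = 3" using assms(7) by auto
  have u: "[0..<4] = [0,1,2,3::nat]" by (simp add: upt_rec)
  show ?thesis
    using is0 js assms(8,9,10)
    apply (elim disjE)
    apply (simp_all add: u)
    by (rule key2; use D assms(1-4) in \<open>simp add: algebra_simps\<close>)+
qed
end
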